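(* Let $x,y\in\mathbb R^d$, let $\mathsf D\in\{\mathsf{KL},\mathsf R_q\}$, and let $\varphi_{x,y}:\mathbb R^d\to\mathbb R^d$ be a map such that $\tilde q_{T,h}(x,v)=\tilde q_{T,h}(y,\varphi_{x,y}(v))$ for all $v\in\mathbb R^d$. Suppose $f\in C^2$ with $\|\nabla^2 f(z)\|_{op}\le L$ for all $z$, $T>0$ satisfies $LT^2\le\frac25\pi^2$, and $h\ge0$. Then \[ \mathsf D(\delta_x\tilde{\mathrm P}_{T,h}\,\|\,\delta_y\tilde{\mathrm P}_{T,h})\le\mathsf D\big((\varphi_{x,y})_\#\boldsymbol\gamma_d\,\|\,\boldsymbol\gamma_d\big). \]
   Context: $f:\mathbb R^d\to\mathbb R$. For $h>0$ with $T/h\in\mathbb N$ (always assumed), $\tilde q_{T,h}(x,v)=x_N$, $N=T/h$, where $x_0=x,v_0=v$, $x_{j+1}=x_j+hv_j-\frac{h^2}2\nabla f(x_j)$, $v_{j+1}=v_j-\frac h2(\nabla f(x_j)+\nabla f(x_{j+1}))$; for $h=0$, $\tilde q_{T,0}(x,v)$ is the time-$T$ position of the solution of $\dot x=v,\dot v=-\nabla f(x)$ from $(x,v)$. $\boldsymbol\gamma_d=\mathcal N(0,I_d)$. $\tilde{\mathrm P}_{T,h}$ maps a probability distribution $\rho$ to the law of $\tilde q_{T,h}(X,\xi)$, $X\sim\rho$, $\xi\sim\boldsymbol\gamma_d$ independent; $\delta_x$ is the Dirac mass. $\mathsf{KL}(\mu\|\pi)=\mathbb E_\mu[\log\frac{d\mu}{d\pi}]$,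 and for $1<q<\infty$, $\mathsf R_q(\mu\|\pi)=\frac1{q-1}\log\mathbb E_\pi[(d\mu/d\pi)^q]$, both $+\infty$ if $\mu\not\ll\pi$. $\psi_\#\rho$ denotes the pushforward. *)

theory Defs
  imports "HOL-Probability.Probability"
begin

text \<open>One leapfrog (velocity Verlet) step; g is the gradient of f.\<close>
definition lf_step :: "('a::real_normed_vector \<Rightarrow> 'a) \<Rightarrow> real \<Rightarrow> 'a \<times> 'a \<Rightarrow> 'a \<times> 'a" where
  "lf_step g h p = (let x = fst p; v = snd p;
                        x' = x + h *\<^sub>R v - (h\<^sup>2 / 2) *\<^sub>R g x
                    in (x', v - (h / 2) *\<^sub>R (g x + g x')))"

definition ham_pos :: "('a::real_normed_vector \<Rightarrow> 'a) \<Rightarrow> real \<Rightarrow> 'a \<Rightarrow> 'a \<Rightarrow> 'a" where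
  "ham_pos g T x v = (THE p. \<exists>X V. X 0 = x \<and> V 0 = v \<and>
      (\<forall>t\<in>{0..T}. (X has_vector_derivative V t) (at t within {0..T}) \<and>
                   (V has_vector_derivative - g (X t)) (at t within {0..T})) \<and> p = X T)"

definition qtilde :: "('a::real_normed_vector \<Rightarrow> 'a) \<Rightarrow> real \<Rightarrow> real \<Rightarrow> 'a \<Rightarrow> 'a \<Rightarrow> 'a" where
  "qtilde g T h x v = (if h = 0 then ham_pos g T x v
     else fst ((lf_step g h ^^ nat \<lfloor>T / h\<rfloor>) (x, v)))"

definition std_gauss :: "'a::euclidean_space measure" where
  "std_gauss = density lborel
     (\<lambda>x. ennreal ((2 * pi) powr (- real DIM('a) / 2) * exp (- (norm x)\<^sup>2 / 2)))"

text \<open>\<open>\<delta>_x P~_{T,h}\<close>: law of q~_{T,h}(x, \<xi>), \<xi> standard Gaussian.\<close>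
definition kernel_from :: "('a::euclidean_space \<Rightarrow> 'a) \<Rightarrow> real \<Rightarrow> real \<Rightarrow> 'a \<Rightarrow> 'a measure" where
  "kernel_from g T h x = distr std_gauss borel (qtilde g T h x)"

definition KL_div :: "'a measure \<Rightarrow> 'a measure \<Rightarrow> ereal" where
  "KL_div \<mu> \<pi> = (if absolutely_continuous \<pi> \<mu> then
      enn2ereal (\<integral>\<^sup>+ x. ennreal (max 0 (ln (enn2real (RN_deriv \<pi> \<mu> x)))) \<partial>\<mu>)
    - enn2ereal (\<integral>\<^sup>+ x. ennreal (max 0 (- ln (enn2real (RN_deriv \<pi> \<mu> x)))) \<partial>\<mu>)
    else \<infinity>)"

definition Renyi_div :: "real \<Rightarrow> 'a measure \<Rightarrow> 'a measure \<Rightarrow> ereal" where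
  "Renyi_div q \<mu> \<pi> = (if absolutely_continuous \<pi> \<mu> then
      (let I = \<integral>\<^sup>+ x. ennreal ((enn2real (RN_deriv \<pi> \<mu> x)) powr q) \<partial>\<pi>
       in if I = \<infinity> then \<infinity> else ereal (ln (enn2real I) / (q - 1)))
    else \<infinity>)"

end

theory Submission
  imports Defs
begin


lemma std_gauss_dens_prod:
  "(2 * pi) powr (- real DIM('a) / 2) * exp (- (norm (x::'a::euclidean_space))\<^sup>2 / 2)
    = (\<Prod>b\<in>Basis. std_normal_density (x \<bullet> b))"
proof -
  have n: "(norm x)\<^sup>2 = (\<Sum>b\<in>Basis. (x \<bullet> b)\<^sup>2)"
  proof -
    have "(norm x)\<^sup>2 = x \<bullet> x" by (simp add: power2_norm_eq_inner)
    also have "\<dots> = (\<Sum>b\<in>Basis. (x \<bullet> b) * (x \<bullet> b))" by (rule euclidean_inner)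
    finally show ?thesis by (simp add: power2_eq_square)
  qed
  have "exp (- (norm x)\<^sup>2 / 2) = (\<Prod>b\<in>Basis. exp (- (x \<bullet> b)\<^sup>2 / 2))"
    unfolding n by (simp add: exp_sum[symmetric] sum_divide_distrib sum_negf)
  moreover have "(2 * pi) powr (- real DIM('a) / 2) = (\<Prod>b\<in>(Basis::'a set). 1 / sqrt (2 * pi))"
  proof -
    have "(\<Prod>b\<in>(Basis::'a set). 1 / sqrt (2 * pi)) = (1 / sqrt (2 * pi)) ^ DIM('a)" by simp
    also have "\<dots> = ((2*pi) powr (1/2)) powr (- real DIM('a))"
      by (simp add: powr_half_sqrt[symmetric] powr_minus_divide powr_realpow[symmetric] powr_powr powr_divide)
    also have "\<dots> = (2 * pi) powr (- real DIM('a) / 2)" by (simp add: powr_powr)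
    finally show ?thesis by simp
  qed
  moreover have "(\<Prod>b\<in>Basis. 1 / sqrt (2 * pi) * exp (- (x \<bullet> b)\<^sup>2 / 2)) =
      (\<Prod>b\<in>(Basis::'a set). 1 / sqrt (2 * pi)) * (\<Prod>b\<in>Basis. exp (- (x \<bullet> b)\<^sup>2 / 2))"
    by (rule prod.distrib)
  ultimately show ?thesis
    unfolding std_normal_density_def by simp
qed

lemma prob_space_std_gauss: "prob_space (std_gauss :: 'a::euclidean_space measure)"
proof
  have "emeasure (std_gauss::'a measure) (space std_gauss) =
     (\<integral>\<^sup>+x. (\<Prod>b\<in>Basis. ennreal (std_normal_density (x \<bullet> b))) \<partial>(lborel::'a measure))"
    unfolding std_gauss_def emeasure_density[OF _ sets.top] std_gauss_dens_prod
    by (simp add: prod_ennreal emeasure_density)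
  also have "\<dots> = (\<Prod>b\<in>(Basis::'a set). (\<integral>\<^sup>+x. ennreal (std_normal_density x) \<partial>lborel))"
    by (rule nn_integral_lborel_prod) auto
  also have "\<dots> = 1"
  proof -
    have "(\<integral>\<^sup>+x. ennreal (std_normal_density x) \<partial>lborel) = 1"
    proof -
      have "emeasure (density lborel (\<lambda>x. ennreal (std_normal_density x))) UNIV = 1"
        using prob_space.emeasure_space_1[OF prob_space_normal_density[of 1 0], unfolded space_density space_lborel space_borel] by simp
      then show ?thesis by (simp add: emeasure_density)
    qed
    then show ?thesis by simp
  qed
  finally show "emeasure (std_gauss::'a measure) (space std_gauss) = 1" .
qed



lemma RN_facts:
  assumes Q: "finite_measure Q" and P: "finite_measure P"
    and ac: "absolutely_continuous Q P" and se: "sets P = sets Q"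
  shows "AE x in Q. RN_deriv Q P x = ennreal (enn2real (RN_deriv Q P x))"
    and "AE x in P. 0 < enn2real (RN_deriv Q P x)"
proof -
  interpret Q: finite_measure Q by fact
  obtain D where D: "D \<in> borel_measurable Q" "AE x in Q. RN_deriv Q P x = ennreal (D x)"
    "AE x in P. 0 < D x" "\<And>x. 0 \<le> D x"
    using Q.real_RN_deriv[OF P ac se] by blast
  show 1: "AE x in Q. RN_deriv Q P x = ennreal (enn2real (RN_deriv Q P x))"
    using D(2) by eventually_elim (simp add: D(4))
  have "AE x in Q. enn2real (RN_deriv Q P x) = D x"
    using D(2) by eventually_elim (simp add: D(4))
  then have "AE x in P. enn2real (RN_deriv Q P x) = D x"
    using absolutely_continuous_AE[OF se ac] by blast
  with D(3) show "AE x in P. 0 < enn2real (RN_deriv Q P x)" by eventually_elim simp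
qed

lemma t_neglog_le: "0 \<le> t \<Longrightarrow> t * max 0 (- ln t) \<le> (1::real)"
proof (cases "t = 0")
  case False
  assume t: "0 \<le> t"
  with False have tp: "0 < t" by simp
  have "- ln t \<le> 1/t - 1" using ln_le_minus_one[of "1/t"] tp by (simp add: ln_div)
  hence "t * (- ln t) \<le> t * (1/t - 1)" using tp by (intro mult_left_mono) auto
  also have "\<dots> = 1 - t" using tp by (simp add: field_simps)
  finally show ?thesis using tp by (auto simp: max_def)
qed simp

lemma neg_part_finite:
  assumes Q: "finite_measure Q" and P: "finite_measure P"
    and ac: "absolutely_continuous Q P" and se: "sets P = sets Q"
  shows "(\<integral>\<^sup>+x. ennreal (max 0 (- ln (enn2real (RN_deriv Q P x)))) \<partial>P) < \<infinity>"
proof -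
  interpret Q: finite_measure Q by fact
  have "(\<integral>\<^sup>+x. ennreal (max 0 (- ln (enn2real (RN_deriv Q P x)))) \<partial>P)
      = (\<integral>\<^sup>+x. RN_deriv Q P x * ennreal (max 0 (- ln (enn2real (RN_deriv Q P x)))) \<partial>Q)"
    by (rule Q.RN_deriv_nn_integral[OF ac se]) measurable
  also have "\<dots> \<le> (\<integral>\<^sup>+x. 1 \<partial>Q)"
  proof (rule nn_integral_mono_AE)
    show "AE x in Q. RN_deriv Q P x * ennreal (max 0 (- ln (enn2real (RN_deriv Q P x)))) \<le> 1"
      using RN_facts(1)[OF Q P ac se]
    proof eventually_elim
      case (elim x)
      define t where "t = enn2real (RN_deriv Q P x)"
      have t0: "0 \<le> t" by (simp add: t_def)
      have "RN_deriv Q P x * ennreal (max 0 (- ln t)) = ennreal (t * max 0 (- ln t))"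
        using elim t0 by (simp add: t_def ennreal_mult'')
      also have "\<dots> \<le> 1" using t_neglog_le[OF t0] by simp
      finally show ?case by (simp add: t_def)
    qed
  qed
  also have "\<dots> < \<infinity>" using Q.emeasure_finite[of "space Q"] by (simp add: less_top[symmetric])
  finally show ?thesis .
qed


lemma ac_distr:
  assumes ac: "absolutely_continuous Q P" and se: "sets P = sets Q" and F: "F \<in> measurable Q N"
  shows "absolutely_continuous (distr Q N F) (distr P N F)"
  unfolding absolutely_continuous_def
proof
  fix A assume A: "A \<in> null_sets (distr Q N F)"
  have FP: "F \<in> measurable P N" using F measurable_cong_sets[OF se refl[of "sets N"]] by simp
  have AN: "A \<in> sets N" using A by auto
  have "F -` A \<inter> space Q \<in> null_sets Q"
    using A F AN by (auto simp: null_sets_def emeasure_distr)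
  then have "F -` A \<inter> space P \<in> null_sets P"
    using ac se sets_eq_imp_space_eq[OF se] unfolding absolutely_continuous_def by auto
  then show "A \<in> null_sets (distr P N F)"
    using AN FP by (auto simp: null_sets_def emeasure_distr)
qed

lemma ereal_cancel_aux:
  fixes a a' b b' :: ennreal
  assumes "a' + b \<le> a + b'" "b < \<infinity>" "b' < \<infinity>"
  shows "enn2ereal a' - enn2ereal b' \<le> enn2ereal a - enn2ereal b"
proof (cases "a = \<infinity>")
  case True
  obtain y where "b = ennreal y" "0 \<le> y" using assms(2) by (cases b) auto
  then show ?thesis using True by simp
next
  case False
  obtain x where x: "a = ennreal x" "0 \<le> x" using False by (cases a) auto
  obtain y where y: "b = ennreal y" "0 \<le> y" using assms(2) by (cases b) auto
  obtain y' where y': "b' = ennreal y'" "0 \<le> y'" using assms(3) by (cases b') auto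
  have "a' \<le> a + b'" using assms(1) by (metis add_increasing2 zero_le order_trans order_refl add_left_mono le_iff_add)
  then have "a' < \<infinity>" using x y' by (auto simp: top_unique simp flip: ennreal_plus intro: le_less_trans)
  then obtain x' where x': "a' = ennreal x'" "0 \<le> x'" by (cases a') auto
  have "x' + y \<le> x + y'" using assms(1) x y x' y' by (simp flip: ennreal_plus)
  then show ?thesis using x y x' y' by simp
qed


lemma ennreal_sum3_le:
  fixes u v w z c :: real
  assumes "0\<le>u" "0\<le>v" "0\<le>w" "0\<le>z" "0\<le>c" "u+v+1 \<le> w+z+c"
  shows "ennreal u + ennreal v + 1 \<le> ennreal w + ennreal z + ennreal c"
proof -
  have "ennreal (u+v+1) \<le> ennreal (w+z+c)" using assms by (intro ennreal_leI)
  then show ?thesis using assms by (simp add: ennreal_plus)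
qed

lemma KL_pointwise:
  assumes a: "0 < (a::real)" and b: "0 < b"
  shows "ennreal (max 0 (ln a)) + ennreal (max 0 (- ln b)) + 1
     \<le> ennreal (max 0 (ln b)) + ennreal (max 0 (- ln a)) + ennreal (a / b)"
proof -
  have h: "ln a - ln b \<le> a/b - 1" using ln_le_minus_one[of "a/b"] a b by (simp add: ln_div)
  have "max 0 (ln a) + max 0 (- ln b) + 1 \<le> max 0 (ln b) + max 0 (- ln a) + a / b"
    using h by (auto simp: max_def split: if_splits)
  then show ?thesis
    using a b by (intro ennreal_sum3_le) auto
qed

lemma KL_dpi:
  assumes Q: "finite_measure Q" and P: "finite_measure P" and se: "sets P = sets Q"
    and F[measurable]: "F \<in> measurable Q N"
  shows "KL_div (distr P N F) (distr Q N F) \<le> KL_div P Q"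
proof (cases "absolutely_continuous Q P")
  case False then show ?thesis by (simp add: KL_div_def)
next
  case ac: True
  interpret Q: finite_measure Q by fact
  interpret P: finite_measure P by fact
  define P' where "P' = distr P N F"
  define Q' where "Q' = distr Q N F"
  have FP[measurable]: "F \<in> measurable P N" using F measurable_cong_sets[OF se refl[of "sets N"]] by simp
  have ac': "absolutely_continuous Q' P'" unfolding P'_def Q'_def by (rule ac_distr[OF ac se F])
  have se': "sets P' = sets Q'" by (simp add: P'_def Q'_def)
  have Q': "finite_measure Q'" unfolding Q'_def by (rule Q.finite_measure_distr[OF F])
  have P': "finite_measure P'" unfolding P'_def by (rule P.finite_measure_distr[OF FP])
  interpret Q': finite_measure Q' by fact
  define p where "p = RN_deriv Q P"
  define r where "r = RN_deriv Q' P'"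
  have pm[measurable]: "p \<in> borel_measurable Q" unfolding p_def by simp
  have pmP[measurable]: "p \<in> borel_measurable P" unfolding measurable_cong_sets[OF se refl[of "sets borel"]] by (rule pm)
  have rm[measurable]: "r \<in> borel_measurable N"
    using borel_measurable_RN_deriv[of Q' P'] unfolding r_def by (simp add: Q'_def)
  define b where "b x = enn2real (p x)" for x
  define a where "a x = enn2real (r (F x))" for x
  have [measurable]: "b \<in> borel_measurable P" "a \<in> borel_measurable P"
     "a \<in> borel_measurable Q" "b \<in> borel_measurable Q" unfolding a_def b_def by measurable
  define A where "A = (\<integral>\<^sup>+x. ennreal (max 0 (ln (b x))) \<partial>P)"
  define B where "B = (\<integral>\<^sup>+x. ennreal (max 0 (- ln (b x))) \<partial>P)"
  define A' where "A' = (\<integral>\<^sup>+x. ennreal (max 0 (ln (a x))) \<partial>P)"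
  define B' where "B' = (\<integral>\<^sup>+x. ennreal (max 0 (- ln (a x))) \<partial>P)"
  have KL: "KL_div P Q = enn2ereal A - enn2ereal B"
    using ac by (simp add: KL_div_def A_def B_def b_def p_def)
  have eq1: "(\<integral>\<^sup>+y. ennreal (max 0 (ln (enn2real (r y)))) \<partial>P') = A'"
    unfolding P'_def A'_def a_def by (rule nn_integral_distr[OF FP]) measurable
  have eq2: "(\<integral>\<^sup>+y. ennreal (max 0 (- ln (enn2real (r y)))) \<partial>P') = B'"
    unfolding P'_def B'_def a_def by (rule nn_integral_distr[OF FP]) measurable
  have KL': "KL_div P' Q' = enn2ereal A' - enn2ereal B'"
    unfolding KL_div_def r_def[symmetric] eq1 eq2 using ac' by simp
  have Bfin: "B < \<infinity>" unfolding B_def b_def p_def by (rule neg_part_finite[OF Q P ac se])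
  have B'fin: "B' < \<infinity>"
    using neg_part_finite[OF Q' P' ac' se'] unfolding r_def[symmetric] eq2 .
  have apos: "AE x in P. 0 < a x"
  proof -
    have "AE y in P'. 0 < enn2real (r y)" using RN_facts(2)[OF Q' P' ac' se'] unfolding r_def .
    then show ?thesis unfolding P'_def a_def
    by (subst (asm) AE_distr_iff) auto
  qed
  have bpos: "AE x in P. 0 < b x"
    using RN_facts(2)[OF Q P ac se] unfolding b_def p_def .
  have pfin: "AE x in Q. p x = ennreal (b x)"
    using RN_facts(1)[OF Q P ac se] unfolding b_def p_def .
  have rfin: "AE x in Q. r (F x) = ennreal (a x)"
  proof -
    have "AE y in Q'. r y = ennreal (enn2real (r y))" using RN_facts(1)[OF Q' P' ac' se'] unfolding r_def .
    then show ?thesis unfolding Q'_def a_def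
    by (subst (asm) AE_distr_iff) auto
  qed
  have key1: "(\<integral>\<^sup>+x. ennreal (a x / b x) \<partial>P) \<le> emeasure P (space P)"
  proof -
    have "(\<integral>\<^sup>+x. ennreal (a x / b x) \<partial>P) = (\<integral>\<^sup>+x. p x * ennreal (a x / b x) \<partial>Q)"
      unfolding p_def by (rule Q.RN_deriv_nn_integral[OF ac se]) measurable
    also have "\<dots> \<le> (\<integral>\<^sup>+x. r (F x) \<partial>Q)"
    proof (rule nn_integral_mono_AE)
      show "AE x in Q. p x * ennreal (a x / b x) \<le> r (F x)"
        using pfin rfin
      proof eventually_elim
        case (elim x)
        have a0: "0 \<le> a x" "0 \<le> b x" by (simp_all add: a_def b_def)
        have "b x * (a x / b x) \<le> a x" using a0 by (cases "b x = 0") auto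
        then show ?case using elim a0 by (simp add: ennreal_mult''[symmetric])
      qed
    qed
    also have "\<dots> = (\<integral>\<^sup>+y. r y \<partial>Q')"
      unfolding Q'_def by (rule nn_integral_distr[symmetric]) auto
    also have "\<dots> = (\<integral>\<^sup>+y. r y * 1 \<partial>Q')" by simp
    also have "\<dots> = (\<integral>\<^sup>+y. 1 \<partial>P')"
      unfolding r_def by (rule Q'.RN_deriv_nn_integral[OF ac' se', symmetric]) simp
    also have "\<dots> = emeasure P (space P)"
      unfolding P'_def using FP by (simp add: emeasure_distr measurable_space[OF FP] Int_absorb1 subset_iff)
    finally show ?thesis .
  qed
  have key2: "A' + B + emeasure P (space P) \<le> A + B' + emeasure P (space P)"
  proof -
    have "A' + B + emeasure P (space P) =
      (\<integral>\<^sup>+x. ennreal (max 0 (ln (a x))) + ennreal (max 0 (- ln (b x))) + 1 \<partial>P)"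
      unfolding A'_def B_def by (simp add: nn_integral_add)
    also have "\<dots> \<le> (\<integral>\<^sup>+x. ennreal (max 0 (ln (b x))) + ennreal (max 0 (- ln (a x))) + ennreal (a x / b x) \<partial>P)"
    proof (rule nn_integral_mono_AE)
      show "AE x in P. ennreal (max 0 (ln (a x))) + ennreal (max 0 (- ln (b x))) + 1
         \<le> ennreal (max 0 (ln (b x))) + ennreal (max 0 (- ln (a x))) + ennreal (a x / b x)"
        using apos bpos by eventually_elim (rule KL_pointwise)
    qed
    also have "\<dots> = A + B' + (\<integral>\<^sup>+x. ennreal (a x / b x) \<partial>P)"
      unfolding A_def B'_def by (simp add: nn_integral_add)
    also have "\<dots> \<le> A + B' + emeasure P (space P)"
      using key1 by (simp add: add_left_mono)
    finally show ?thesis .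
  qed
  have "emeasure P (space P) + (A' + B) \<le> emeasure P (space P) + (A + B')"
    using key2 by (simp add: ac_simps)
  then have "A' + B \<le> A + B'"
    using P.emeasure_finite[of "space P"] by (simp add: ennreal_add_left_cancel_le)
  then show ?thesis
    unfolding P'_def[symmetric] Q'_def[symmetric] KL KL'
    by (rule ereal_cancel_aux[OF _ Bfin B'fin])
qed


lemma young_aux:
  fixes b c q :: real
  assumes c: "0 \<le> c" and b: "0 \<le> b" and q: "1 < q"
  shows "c powr (q-1) * b \<le> (q-1)/q * c powr q + b powr q / q"
proof -
  have "c powr (q-1) * b \<le> (c powr (q-1)) powr (q/(q-1)) / (q/(q-1)) + b powr q / q"
    using q b by (intro Youngs_inequality) (auto simp: field_simps)
  also have "(c powr (q-1)) powr (q/(q-1)) = c powr q" using q by (simp add: powr_powr)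
  finally show ?thesis by (simp add: field_simps)
qed

lemma trunc_aux:
  fixes a c q :: real
  assumes c: "0 \<le> c" "c \<le> a" and q: "1 < q"
  shows "c powr q \<le> c powr (q-1) * a"
proof (cases "c = 0")
  case False
  have "c powr q = c powr (q-1) * c" using powr_mult_base[OF c(1), of "q-1"] by (simp add: mult.commute)
  also have "\<dots> \<le> c powr (q-1) * a" using c by (intro mult_left_mono) auto
  finally show ?thesis .
qed simp

lemma finalize_aux:
  fixes J I :: ennreal and q :: real
  assumes "J \<le> ennreal ((q-1)/q) * J + ennreal (1/q) * I" "J < \<infinity>" "I < \<infinity>" "1 < q"
  shows "J \<le> I"
proof -
  obtain j i where ji: "J = ennreal j" "I = ennreal i" "0 \<le> j" "0 \<le> i"
    using assms by (cases J; cases I) auto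
  have "j \<le> (q-1)/q * j + 1/q * i"
    using assms(1) ji assms(4) by (simp add: ennreal_mult''[symmetric] ennreal_plus[symmetric] del: ennreal_plus)
  then have "j * q \<le> ((q-1)/q * j + 1/q * i) * q" using assms(4) by (intro mult_right_mono) auto
  then have "j \<le> i" using assms(4) by (simp add: field_simps)
  then show ?thesis using ji by simp
qed


lemma Renyi_dpi:
  assumes Q: "finite_measure Q" and P: "finite_measure P" and se: "sets P = sets Q"
    and F[measurable]: "F \<in> measurable Q N" and Pnz: "emeasure P (space P) \<noteq> 0" and q: "1 < q"
  shows "Renyi_div q (distr P N F) (distr Q N F) \<le> Renyi_div q P Q"
proof (cases "absolutely_continuous Q P")
  case False then show ?thesis by (simp add: Renyi_div_def)
next
  case ac: True
  interpret Q: finite_measure Q by fact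
  interpret P: finite_measure P by fact
  define P' where "P' = distr P N F"
  define Q' where "Q' = distr Q N F"
  have FP[measurable]: "F \<in> measurable P N" using F measurable_cong_sets[OF se refl[of "sets N"]] by simp
  have ac': "absolutely_continuous Q' P'" unfolding P'_def Q'_def by (rule ac_distr[OF ac se F])
  have se': "sets P' = sets Q'" by (simp add: P'_def Q'_def)
  have Q': "finite_measure Q'" unfolding Q'_def by (rule Q.finite_measure_distr[OF F])
  have P': "finite_measure P'" unfolding P'_def by (rule P.finite_measure_distr[OF FP])
  interpret Q': finite_measure Q' by fact
  define p where "p = RN_deriv Q P"
  define r where "r = RN_deriv Q' P'"
  have pm[measurable]: "p \<in> borel_measurable Q" unfolding p_def by simp
  have pmP[measurable]: "p \<in> borel_measurable P" unfolding measurable_cong_sets[OF se refl[of "sets borel"]] by (rule pm)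
  have rm[measurable]: "r \<in> borel_measurable N"
    using borel_measurable_RN_deriv[of Q' P'] unfolding r_def by (simp add: Q'_def)
  define b where "b x = enn2real (p x)" for x
  define a where "a x = enn2real (r (F x))" for x
  have [measurable]: "b \<in> borel_measurable P" "a \<in> borel_measurable P" "b \<in> borel_measurable Q"
     "a \<in> borel_measurable Q" unfolding a_def b_def by measurable
  have a0: "\<And>x. 0 \<le> a x" and b0: "\<And>x. 0 \<le> b x" by (simp_all add: a_def b_def)
  have pfin: "AE x in Q. p x = ennreal (b x)"
    using RN_facts(1)[OF Q P ac se] unfolding b_def p_def .
  have rfin: "AE x in Q. r (F x) = ennreal (a x)"
  proof -
    have "AE y in Q'. r y = ennreal (enn2real (r y))" using RN_facts(1)[OF Q' P' ac' se'] unfolding r_def .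
    then show ?thesis unfolding Q'_def a_def
    by (subst (asm) AE_distr_iff) auto
  qed
  define I where "I = (\<integral>\<^sup>+x. ennreal (b x powr q) \<partial>Q)"
  define I' where "I' = (\<integral>\<^sup>+x. ennreal (a x powr q) \<partial>Q)"
  have R: "Renyi_div q P Q = (if I = \<infinity> then \<infinity> else ereal (ln (enn2real I) / (q - 1)))"
    using ac by (simp add: Renyi_div_def I_def b_def p_def Let_def)
  have R': "Renyi_div q P' Q' = (if I' = \<infinity> then \<infinity> else ereal (ln (enn2real I') / (q - 1)))"
    using ac' by (simp add: Renyi_div_def I'_def a_def r_def Q'_def Let_def nn_integral_distr)
  have rint: "(\<integral>\<^sup>+x. r (F x) \<partial>Q) = emeasure P (space P)"
  proof -
    have "(\<integral>\<^sup>+x. r (F x) \<partial>Q) = (\<integral>\<^sup>+y. r y \<partial>Q')"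
      unfolding Q'_def by (rule nn_integral_distr[symmetric]) auto
    also have "\<dots> = (\<integral>\<^sup>+y. r y * 1 \<partial>Q')" by simp
    also have "\<dots> = (\<integral>\<^sup>+y. 1 \<partial>P')"
      unfolding r_def by (rule Q'.RN_deriv_nn_integral[OF ac' se', symmetric]) simp
    also have "\<dots> = emeasure P (space P)"
      unfolding P'_def using FP by (simp add: emeasure_distr measurable_space[OF FP] Int_absorb1 subset_iff)
    finally show ?thesis .
  qed
  show ?thesis
  proof (cases "I = \<infinity>")
    case True then show ?thesis unfolding P'_def[symmetric] Q'_def[symmetric] R by simp
  next
    case Ifin: False
    define c where "c n x = min (a x) (real n)" for n x
    have c0: "\<And>n x. 0 \<le> c n x" unfolding c_def using a0 by simp
    have [measurable]: "\<And>n. c n \<in> borel_measurable Q" unfolding c_def by measurable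
    define J where "J n = (\<integral>\<^sup>+x. ennreal (c n x powr q) \<partial>Q)" for n
    have Jfin: "J n < \<infinity>" for n
    proof -
      have "J n \<le> (\<integral>\<^sup>+x. ennreal (real n powr q) \<partial>Q)"
        unfolding J_def using q c0
        by (intro nn_integral_mono ennreal_leI powr_mono2) (auto simp: c_def)
      also have "\<dots> < \<infinity>" using Q.emeasure_finite[of "space Q"]
        by (simp add: ennreal_mult_eq_top_iff less_top[symmetric])
      finally show ?thesis .
    qed
    have JI: "J n \<le> I" for n
    proof -
      have "J n \<le> (\<integral>\<^sup>+x. ennreal (c n x powr (q-1)) * r (F x) \<partial>Q)"
        unfolding J_def
      proof (rule nn_integral_mono_AE)
        show "AE x in Q. ennreal (c n x powr q) \<le> ennreal (c n x powr (q-1)) * r (F x)"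
          using rfin
        proof eventually_elim
          case (elim x)
          have "c n x powr q \<le> c n x powr (q-1) * a x"
            using c0 q by (intro trunc_aux) (auto simp: c_def)
          then show ?case using elim a0 by (simp add: ennreal_mult''[symmetric])
        qed
      qed
      also have "\<dots> = (\<integral>\<^sup>+y. r y * ennreal (min (enn2real (r y)) (real n) powr (q-1)) \<partial>Q')"
        unfolding Q'_def by (subst nn_integral_distr) (auto simp: c_def a_def mult.commute)
      also have "\<dots> = (\<integral>\<^sup>+y. ennreal (min (enn2real (r y)) (real n) powr (q-1)) \<partial>P')"
        unfolding r_def by (rule Q'.RN_deriv_nn_integral[OF ac' se', symmetric]) simp
      also have "\<dots> = (\<integral>\<^sup>+x. ennreal (c n x powr (q-1)) \<partial>P)"
        unfolding P'_def by (subst nn_integral_distr) (auto simp: c_def a_def)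
      also have "\<dots> = (\<integral>\<^sup>+x. p x * ennreal (c n x powr (q-1)) \<partial>Q)"
        unfolding p_def by (rule Q.RN_deriv_nn_integral[OF ac se]) measurable
      also have "\<dots> \<le> (\<integral>\<^sup>+x. ennreal ((q-1)/q) * ennreal (c n x powr q) + ennreal (1/q) * ennreal (b x powr q) \<partial>Q)"
      proof (rule nn_integral_mono_AE)
        show "AE x in Q. p x * ennreal (c n x powr (q-1)) \<le> ennreal ((q-1)/q) * ennreal (c n x powr q) + ennreal (1/q) * ennreal (b x powr q)"
          using pfin
        proof eventually_elim
          case (elim x)
          have "c n x powr (q-1) * b x \<le> (q-1)/q * c n x powr q + b x powr q / q"
            by (rule young_aux[OF c0 b0 q])
          then have "ennreal (b x * c n x powr (q-1)) \<le> ennreal ((q-1)/q * c n x powr q + 1/q * b x powr q)"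
            by (intro ennreal_leI) (simp add: mult.commute)
          then show ?case using elim b0 c0 q
            by (simp add: ennreal_mult''[symmetric] ennreal_plus[symmetric] del: ennreal_plus)
        qed
      qed
      also have "\<dots> = ennreal ((q-1)/q) * J n + ennreal (1/q) * I"
        unfolding J_def I_def by (simp add: nn_integral_add nn_integral_cmult)
      finally show ?thesis
        using finalize_aux Jfin Ifin q by (simp add: less_top[symmetric])
    qed
    have I'sup: "I' = (SUP n. J n)"
    proof -
      have inc: "incseq (\<lambda>n x. ennreal (c n x powr q))"
        unfolding incseq_def le_fun_def c_def using q a0
        by (auto intro!: ennreal_leI powr_mono2)
      have pw: "(SUP n. ennreal (c n x powr q)) = ennreal (a x powr q)" for x
      proof (rule antisym)
        show "(SUP n. ennreal (c n x powr q)) \<le> ennreal (a x powr q)"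
          using q c0 by (intro SUP_least ennreal_leI powr_mono2) (auto simp: c_def)
        have "c (nat \<lceil>a x\<rceil>) x = a x" unfolding c_def by (simp add: real_nat_ceiling_ge)
        then show "ennreal (a x powr q) \<le> (SUP n. ennreal (c n x powr q))"
          by (intro SUP_upper2[where i="nat \<lceil>a x\<rceil>"]) auto
      qed
      show ?thesis
        unfolding I'_def J_def pw[symmetric]
        by (rule nn_integral_monotone_convergence_SUP[OF inc]) measurable
    qed
    have I'I: "I' \<le> I" unfolding I'sup by (intro SUP_least JI)
    have I'nz: "I' \<noteq> 0"
    proof
      assume "I' = 0"
      then have "AE x in Q. ennreal (a x powr q) = 0"
        unfolding I'_def by (subst (asm) nn_integral_0_iff_AE) auto
      then have "AE x in Q. r (F x) = 0"
        using rfin by eventually_elim (use a0 in \<open>auto simp: ennreal_eq_0_iff\<close>)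
      then have "(\<integral>\<^sup>+x. r (F x) \<partial>Q) = 0"
        by (subst nn_integral_0_iff_AE) auto
      then show False using rint Pnz by simp
    qed
    have I'fin: "I' \<noteq> \<infinity>" using I'I Ifin by (auto simp: top_unique)
    have "ln (enn2real I') \<le> ln (enn2real I)"
    proof (rule ln_mono)
      show "0 < enn2real I'" using I'nz I'fin by (simp add: enn2real_positive_iff less_top[symmetric] zero_less_iff_neq_zero)
      show "enn2real I' \<le> enn2real I" using I'I Ifin by (intro enn2real_mono) (auto simp: less_top[symmetric])
    qed
    then have "ln (enn2real I') / (q-1) \<le> ln (enn2real I) / (q-1)"
      using q by (intro divide_right_mono) auto
    then show ?thesis unfolding P'_def[symmetric] Q'_def[symmetric] R R' using Ifin I'fin by simp
  qed
qed



definition is_sol :: "('a::real_normed_vector \<Rightarrow> 'a) \<Rightarrow> real \<Rightarrow> 'a \<Rightarrow> 'a \<Rightarrow> (real \<Rightarrow> 'a) \<Rightarrow> (real \<Rightarrow> 'a) \<Rightarrow> bool" where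
  "is_sol g T x v X V \<longleftrightarrow> X 0 = x \<and> V 0 = v \<and>
    (\<forall>t\<in>{0..T}. (X has_vector_derivative V t) (at t within {0..T}) \<and>
                 (V has_vector_derivative - g (X t)) (at t within {0..T}))"

lemma ham_pos_is_sol: "ham_pos g T x v = (THE p. \<exists>X V. is_sol g T x v X V \<and> p = X T)"
  unfolding ham_pos_def is_sol_def by (simp add: conj_assoc)

lemma stab:
  fixes g :: "'a::real_inner \<Rightarrow> 'a"
  assumes lip: "\<And>u w. norm (g u - g w) \<le> L * norm (u - w)" and L: "0 \<le> L"
    and s1: "is_sol g T x1 v1 X1 V1" and s2: "is_sol g T x2 v2 X2 V2" and t: "t \<in> {0..T}"
  shows "(norm (X1 t - X2 t))\<^sup>2 + (norm (V1 t - V2 t))\<^sup>2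
     \<le> exp ((1+L) * t) * ((norm (x1 - x2))\<^sup>2 + (norm (v1 - v2))\<^sup>2)"
proof -
  define K where "K = 1 + L"
  define w where "w s = (X1 s - X2 s) \<bullet> (X1 s - X2 s) + (V1 s - V2 s) \<bullet> (V1 s - V2 s)" for s
  define w' where "w' s = 2 * ((X1 s - X2 s) \<bullet> (V1 s - V2 s)) - 2 * ((V1 s - V2 s) \<bullet> (g (X1 s) - g (X2 s)))" for s
  have dw: "(w has_real_derivative w' s) (at s within {0..T})" if s: "s \<in> {0..T}" for s
  proof -
    have dX: "((\<lambda>s. X1 s - X2 s) has_vector_derivative (V1 s - V2 s)) (at s within {0..T})"
      using s1 s2 s unfolding is_sol_def by (intro has_vector_derivative_diff) auto
    have dV: "((\<lambda>s. V1 s - V2 s) has_vector_derivative (- g (X1 s) - - g (X2 s))) (at s within {0..T})"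
      using s1 s2 s unfolding is_sol_def by (intro has_vector_derivative_diff) auto
    have "(w has_vector_derivative
        ((X1 s - X2 s) \<bullet> (V1 s - V2 s) + (V1 s - V2 s) \<bullet> (X1 s - X2 s)
         + ((V1 s - V2 s) \<bullet> (- g (X1 s) - - g (X2 s)) + (- g (X1 s) - - g (X2 s)) \<bullet> (V1 s - V2 s))))
        (at s within {0..T})"
      unfolding w_def
      by (intro has_vector_derivative_add bounded_bilinear.has_vector_derivative[OF bounded_bilinear_inner] dX dV)
    then have "(w has_vector_derivative w' s) (at s within {0..T})"
      by (rule has_vector_derivative_eq_rhs) (simp add: w'_def inner_commute inner_diff_left inner_diff_right algebra_simps)
    then show ?thesis by (simp add: has_real_derivative_iff_has_vector_derivative)
  qed
  have w'le: "w' s \<le> K * w s" for s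
  proof -
    define a where "a = norm (X1 s - X2 s)"
    define b where "b = norm (V1 s - V2 s)"
    have a0: "0 \<le> a" and b0: "0 \<le> b" by (simp_all add: a_def b_def)
    have i1: "(X1 s - X2 s) \<bullet> (V1 s - V2 s) \<le> a * b" unfolding a_def b_def by (rule norm_cauchy_schwarz)
    have "- ((V1 s - V2 s) \<bullet> (g (X1 s) - g (X2 s))) = (V1 s - V2 s) \<bullet> (g (X2 s) - g (X1 s))"
      by (simp add: inner_diff_right)
    also have "\<dots> \<le> b * norm (g (X2 s) - g (X1 s))" unfolding b_def by (rule norm_cauchy_schwarz)
    also have "\<dots> \<le> b * (L * a)"
      using lip[of "X2 s" "X1 s"] b0 by (intro mult_left_mono) (auto simp: a_def norm_minus_commute)
    finally have i2: "- ((V1 s - V2 s) \<bullet> (g (X1 s) - g (X2 s))) \<le> L * a * b" by (simp add: ac_simps)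
    have ww: "w s = a\<^sup>2 + b\<^sup>2" by (simp add: w_def a_def b_def power2_norm_eq_inner)
    have sq: "2 * a * b \<le> a\<^sup>2 + b\<^sup>2" using sum_squares_bound[of a b] by simp
    have "w' s \<le> 2 * (1 + L) * a * b" using i1 i2 by (simp add: w'_def algebra_simps)
    also have "\<dots> = (1 + L) * (2 * a * b)" by simp
    also have "\<dots> \<le> (1 + L) * (a\<^sup>2 + b\<^sup>2)" using sq L by (intro mult_left_mono) auto
    finally show ?thesis by (simp add: K_def ww)
  qed
  define u where "u s = exp (- (K * s)) * w s" for s
  have du: "(u has_real_derivative (exp (- (K * s)) * (w' s - K * w s))) (at s within {0..T})"
    if s: "s \<in> {0..T}" for s
    unfolding u_def
    by (rule derivative_eq_intros dw[OF s] refl | simp add: algebra_simps)+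
  have ucont: "continuous_on {0..T} u"
  proof -
    have "continuous (at s within {0..T}) u" if "s \<in> {0..T}" for s
      using du[OF that] by (rule DERIV_continuous)
    then show ?thesis by (simp add: continuous_on_eq_continuous_within)
  qed
  have ut: "u t \<le> u 0"
  proof (cases "t = 0")
    case False
    with t have t0: "0 < t" "t \<le> T" by auto
    show ?thesis
    proof (rule DERIV_nonpos_imp_decreasing_open[of 0 t u])
      show "0 \<le> t" using t0 by simp
      show "continuous_on {0..t} u" using t0 by (intro continuous_on_subset[OF ucont]) auto
      fix s assume s: "0 < s" "s < t"
      have "at s within {0..T} = at s" using s t0 by (intro at_within_interior) auto
      then have "DERIV u s :> exp (- (K * s)) * (w' s - K * w s)" using du[of s] s t0 by simp
      moreover have "exp (- (K * s)) * (w' s - K * w s) \<le> 0"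
        using w'le[of s] by (intro mult_nonneg_nonpos) auto
      ultimately show "\<exists>y. DERIV u s :> y \<and> y \<le> 0" by blast
    qed
  qed simp
  have "w t = exp (K * t) * u t" by (simp add: u_def exp_minus field_simps)
  also have "\<dots> \<le> exp (K * t) * u 0" using ut by (intro mult_left_mono) auto
  also have "u 0 = w 0" by (simp add: u_def)
  finally have "w t \<le> exp (K * t) * w 0" .
  moreover have "X1 0 = x1" "X2 0 = x2" "V1 0 = v1" "V2 0 = v2" using s1 s2 by (auto simp: is_sol_def)
  ultimately show ?thesis by (simp add: w_def K_def power2_norm_eq_inner)
qed


lemma stab_norm:
  fixes g :: "'a::real_inner \<Rightarrow> 'a"
  assumes lip: "\<And>u w. norm (g u - g w) \<le> L * norm (u - w)" and L: "0 \<le> L"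
    and s1: "is_sol g T y v1 X1 V1" and s2: "is_sol g T y v2 X2 V2" and t: "t \<in> {0..T}"
  shows "norm (X1 t - X2 t) \<le> sqrt (exp ((1+L) * T)) * norm (v1 - v2)"
    and "norm (V1 t - V2 t) \<le> sqrt (exp ((1+L) * T)) * norm (v1 - v2)"
proof -
  define C where "C = sqrt (exp ((1+L) * T))"
  have st: "(norm (X1 t - X2 t))\<^sup>2 + (norm (V1 t - V2 t))\<^sup>2 \<le> exp ((1+L) * t) * (norm (v1 - v2))\<^sup>2"
    using stab[OF lip L s1 s2 t] by simp
  have "exp ((1+L) * t) * (norm (v1 - v2))\<^sup>2 \<le> exp ((1+L) * T) * (norm (v1 - v2))\<^sup>2"
    using t L by (intro mult_right_mono) (auto intro!: mult_left_mono)
  also have "\<dots> = (C * norm (v1 - v2))\<^sup>2" by (simp add: C_def power_mult_distrib)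
  finally have st2: "(norm (X1 t - X2 t))\<^sup>2 + (norm (V1 t - V2 t))\<^sup>2 \<le> (C * norm (v1 - v2))\<^sup>2"
    using st by linarith
  have C0: "0 \<le> C * norm (v1 - v2)" by (simp add: C_def)
  have "(norm (X1 t - X2 t))\<^sup>2 \<le> (C * norm (v1 - v2))\<^sup>2"
    using st2 zero_le_power2[of "norm (V1 t - V2 t)"] by linarith
  then show "norm (X1 t - X2 t) \<le> C * norm (v1 - v2)" using C0 by (rule power2_le_imp_le)
  have "(norm (V1 t - V2 t))\<^sup>2 \<le> (C * norm (v1 - v2))\<^sup>2"
    using st2 zero_le_power2[of "norm (X1 t - X2 t)"] by linarith
  then show "norm (V1 t - V2 t) \<le> C * norm (v1 - v2)" using C0 by (rule power2_le_imp_le)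
qed

lemma sol_unique:
  fixes g :: "'a::real_inner \<Rightarrow> 'a"
  assumes lip: "\<And>u w. norm (g u - g w) \<le> L * norm (u - w)" and L: "0 \<le> L" and T: "0 \<le> T"
    and s1: "is_sol g T y v X1 V1" and s2: "is_sol g T y v X2 V2"
  shows "X1 T = X2 T"
  using stab_norm(1)[OF lip L s1 s2, of T] T by simp

lemma ham_pos_sol:
  fixes g :: "'a::real_inner \<Rightarrow> 'a"
  assumes lip: "\<And>u w. norm (g u - g w) \<le> L * norm (u - w)" and L: "0 \<le> L" and T: "0 \<le> T"
    and s: "is_sol g T y v X V"
  shows "ham_pos g T y v = X T"
  unfolding ham_pos_is_sol
proof (rule the_equality)
  show "\<exists>X' V'. is_sol g T y v X' V' \<and> X T = X' T" using s by blast
  fix p assume "\<exists>X' V'. is_sol g T y v X' V' \<and> p = X' T"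
  then obtain X' V' where s': "is_sol g T y v X' V'" and p: "p = X' T" by blast
  have "X' T = X T" by (rule sol_unique[OF lip L T s' s])
  then show "p = X T" using p by simp
qed

lemma cauchy_transfer:
  fixes a :: "nat \<Rightarrow> 'a::real_normed_vector" and b :: "nat \<Rightarrow> 'b::real_normed_vector"
  assumes le: "\<And>m n. norm (a m - a n) \<le> C * norm (b m - b n)" and C: "0 \<le> C" and b: "Cauchy b"
  shows "Cauchy a"
proof (rule CauchyI)
  fix e :: real assume e: "0 < e"
  obtain M where M: "\<forall>m\<ge>M. \<forall>n\<ge>M. norm (b m - b n) < e / (C + 1)"
    using CauchyD[OF b, of "e / (C+1)"] e C by auto
  have "norm (a m - a n) < e" if "m \<ge> M" "n \<ge> M" for m n
  proof -
    have "norm (a m - a n) \<le> C * norm (b m - b n)" by (rule le)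
    also have "\<dots> \<le> C * (e / (C + 1))" using M that C by (intro mult_left_mono) (auto simp: less_imp_le)
    also have "\<dots> < e" using e C by (simp add: field_simps)
    finally show ?thesis .
  qed
  then show "\<exists>M. \<forall>m\<ge>M. \<forall>n\<ge>M. norm (a m - a n) < e" by blast
qed

lemma unif_eventually:
  fixes vs :: "nat \<Rightarrow> 'a::real_normed_vector"
  assumes bd: "\<And>n t. t \<in> S \<Longrightarrow> norm (D n t - E t) \<le> B * norm (vs n - v)" and B: "0 \<le> B"
    and lim: "vs \<longlonglongrightarrow> v" and e: "0 < e"
  shows "\<forall>\<^sub>F n in sequentially. \<forall>t\<in>S. norm (D n t - E t) \<le> e"
proof -
  obtain N where N: "\<forall>n\<ge>N. norm (vs n - v) < e / (B + 1)"
    using LIMSEQ_D[OF lim, of "e / (B+1)"] e B by auto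
  have "\<forall>t\<in>S. norm (D n t - E t) \<le> e" if "n \<ge> N" for n
  proof
    fix t assume t: "t \<in> S"
    have "norm (D n t - E t) \<le> B * norm (vs n - v)" by (rule bd[OF t])
    also have "\<dots> \<le> B * (e / (B + 1))" using N that B by (intro mult_left_mono) (auto simp: less_imp_le)
    also have "\<dots> \<le> e" using e B by (simp add: field_simps)
    finally show "norm (D n t - E t) \<le> e" .
  qed
  then show ?thesis unfolding eventually_sequentially by blast
qed

lemma seq_deriv:
  fixes Fs :: "nat \<Rightarrow> real \<Rightarrow> 'a::banach"
  assumes der: "\<And>n t. t \<in> {0..T} \<Longrightarrow> (Fs n has_vector_derivative Ds n t) (at t within {0..T})"
    and conv: "\<And>t. t \<in> {0..T} \<Longrightarrow> (\<lambda>n. Fs n t) \<longlonglongrightarrow> F t"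
    and unif: "\<And>e. 0 < e \<Longrightarrow> \<forall>\<^sub>F n in sequentially. \<forall>t\<in>{0..T}. norm (Ds n t - D t) \<le> e"
    and T: "0 \<le> T" and t: "t \<in> {0..T}"
  shows "(F has_vector_derivative D t) (at t within {0..T})"
proof -
  have "\<exists>G. \<forall>x\<in>{0..T}. (\<lambda>n. Fs n x) \<longlonglongrightarrow> G x \<and> (G has_derivative (\<lambda>h. h *\<^sub>R D x)) (at x within {0..T})"
  proof (rule has_derivative_sequence[where f'="\<lambda>n x h. h *\<^sub>R Ds n x"])
    show "convex {0..T}" by simp
    show "\<And>n x. x \<in> {0..T} \<Longrightarrow> (Fs n has_derivative (\<lambda>h. h *\<^sub>R Ds n x)) (at x within {0..T})"
      using der by (simp add: has_vector_derivative_def)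
    show "\<forall>\<^sub>F n in sequentially. \<forall>x\<in>{0..T}. \<forall>h. norm (h *\<^sub>R Ds n x - h *\<^sub>R D x) \<le> e * norm h"
      if e: "0 < e" for e
      using unif[OF e]
    proof eventually_elim
      case (elim n)
      show ?case
      proof (intro ballI allI)
        fix x h assume x: "x \<in> {0..T}"
        have "norm (h *\<^sub>R Ds n x - h *\<^sub>R D x) = \<bar>h\<bar> * norm (Ds n x - D x)"
          by (simp add: scaleR_diff_right[symmetric])
        also have "\<dots> \<le> \<bar>h\<bar> * e" using elim x by (intro mult_left_mono) auto
        finally show "norm (h *\<^sub>R Ds n x - h *\<^sub>R D x) \<le> e * norm h" by (simp add: mult.commute)
      qed
    qed
    show "0 \<in> {0..T}" using T by simp
    show "(\<lambda>n. Fs n 0) \<longlonglongrightarrow> F 0" using conv T by simp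
  qed
  then obtain G where G: "\<And>x. x \<in> {0..T} \<Longrightarrow> (\<lambda>n. Fs n x) \<longlonglongrightarrow> G x"
    "\<And>x. x \<in> {0..T} \<Longrightarrow> (G has_derivative (\<lambda>h. h *\<^sub>R D x)) (at x within {0..T})" by blast
  have GF: "\<And>x. x \<in> {0..T} \<Longrightarrow> F x = G x" using G(1) conv LIMSEQ_unique by blast
  show ?thesis unfolding has_vector_derivative_def
    by (rule has_derivative_transform[OF t GF G(2)[OF t]])
qed


lemma E_closed:
  fixes g :: "'a::euclidean_space \<Rightarrow> 'a"
  assumes lip: "\<And>u w. norm (g u - g w) \<le> L * norm (u - w)" and L: "0 \<le> L" and T: "0 \<le> T"
  shows "closed {v. \<exists>X V. is_sol g T y v X V}"
  unfolding closed_sequential_limits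
proof (intro allI impI, elim conjE)
  fix vs v assume inE: "\<forall>n. vs n \<in> {v. \<exists>X V. is_sol g T y v X V}" and lim: "vs \<longlonglongrightarrow> v"
  from inE have "\<forall>n. \<exists>X V. is_sol g T y (vs n) X V" by simp
  then obtain Xs Vs where sols: "\<And>n. is_sol g T y (vs n) (Xs n) (Vs n)" by metis
  define C where "C = sqrt (exp ((1+L)*T))"
  have C0: "0 \<le> C" by (simp add: C_def)
  have bX: "norm (Xs m t - Xs n t) \<le> C * norm (vs m - vs n)" if "t \<in> {0..T}" for m n t
    unfolding C_def by (rule stab_norm(1)[OF lip L sols sols that])
  have bV: "norm (Vs m t - Vs n t) \<le> C * norm (vs m - vs n)" if "t \<in> {0..T}" for m n t
    unfolding C_def by (rule stab_norm(2)[OF lip L sols sols that])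
  have cb: "Cauchy vs" using lim by (rule LIMSEQ_imp_Cauchy)
  define X where "X t = lim (\<lambda>n. Xs n t)" for t
  define V where "V t = lim (\<lambda>n. Vs n t)" for t
  have cX: "(\<lambda>n. Xs n t) \<longlonglongrightarrow> X t" if "t \<in> {0..T}" for t
  proof -
    have "Cauchy (\<lambda>n. Xs n t)" by (rule cauchy_transfer[OF bX[OF that] C0 cb])
    then show ?thesis unfolding X_def by (simp add: Cauchy_convergent_iff convergent_LIMSEQ_iff)
  qed
  have cV: "(\<lambda>n. Vs n t) \<longlonglongrightarrow> V t" if "t \<in> {0..T}" for t
  proof -
    have "Cauchy (\<lambda>n. Vs n t)" by (rule cauchy_transfer[OF bV[OF that] C0 cb])
    then show ?thesis unfolding V_def by (simp add: Cauchy_convergent_iff convergent_LIMSEQ_iff)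
  qed
  have uX: "norm (Xs n t - X t) \<le> C * norm (vs n - v)" if t: "t \<in> {0..T}" for n t
  proof (rule LIMSEQ_le)
    show "(\<lambda>m. norm (Xs n t - Xs m t)) \<longlonglongrightarrow> norm (Xs n t - X t)"
      by (intro tendsto_intros cX[OF t])
    show "(\<lambda>m. C * norm (vs n - vs m)) \<longlonglongrightarrow> C * norm (vs n - v)"
      by (intro tendsto_intros lim)
    show "\<exists>N. \<forall>m\<ge>N. norm (Xs n t - Xs m t) \<le> C * norm (vs n - vs m)" using bX[OF t] by blast
  qed
  have uV: "norm (Vs n t - V t) \<le> C * norm (vs n - v)" if t: "t \<in> {0..T}" for n t
  proof (rule LIMSEQ_le)
    show "(\<lambda>m. norm (Vs n t - Vs m t)) \<longlonglongrightarrow> norm (Vs n t - V t)"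
      by (intro tendsto_intros cV[OF t])
    show "(\<lambda>m. C * norm (vs n - vs m)) \<longlonglongrightarrow> C * norm (vs n - v)"
      by (intro tendsto_intros lim)
    show "\<exists>N. \<forall>m\<ge>N. norm (Vs n t - Vs m t) \<le> C * norm (vs n - vs m)" using bV[OF t] by blast
  qed
  have uG: "norm (- g (Xs n t) - - g (X t)) \<le> (L * C) * norm (vs n - v)" if t: "t \<in> {0..T}" for n t
  proof -
    have "norm (- g (Xs n t) - - g (X t)) = norm (g (X t) - g (Xs n t))" by (simp add: norm_minus_commute)
    also have "\<dots> \<le> L * norm (X t - Xs n t)" by (rule lip)
    also have "\<dots> \<le> L * (C * norm (vs n - v))"
      using uX[OF t, of n] L by (intro mult_left_mono) (auto simp: norm_minus_commute)
    finally show ?thesis by (simp add: ac_simps)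
  qed
  have dX: "(X has_vector_derivative V t) (at t within {0..T})" if t: "t \<in> {0..T}" for t
  proof (rule seq_deriv[where Fs=Xs and Ds=Vs])
    show "\<And>n t. t \<in> {0..T} \<Longrightarrow> (Xs n has_vector_derivative Vs n t) (at t within {0..T})"
      using sols by (auto simp: is_sol_def)
    show "\<And>t. t \<in> {0..T} \<Longrightarrow> (\<lambda>n. Xs n t) \<longlonglongrightarrow> X t" by (rule cX)
    show "\<And>e. 0 < e \<Longrightarrow> \<forall>\<^sub>F n in sequentially. \<forall>t\<in>{0..T}. norm (Vs n t - V t) \<le> e"
      by (rule unif_eventually[OF uV C0 lim])
  qed (use T t in auto)
  have dV: "(V has_vector_derivative - g (X t)) (at t within {0..T})" if t: "t \<in> {0..T}" for t
  proof (rule seq_deriv[where Fs=Vs and Ds="\<lambda>n t. - g (Xs n t)"])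
    show "\<And>n t. t \<in> {0..T} \<Longrightarrow> (Vs n has_vector_derivative - g (Xs n t)) (at t within {0..T})"
      using sols by (auto simp: is_sol_def)
    show "\<And>t. t \<in> {0..T} \<Longrightarrow> (\<lambda>n. Vs n t) \<longlonglongrightarrow> V t" by (rule cV)
    show "\<And>e. 0 < e \<Longrightarrow> \<forall>\<^sub>F n in sequentially. \<forall>t\<in>{0..T}. norm (- g (Xs n t) - - g (X t)) \<le> e"
      by (rule unif_eventually[OF uG _ lim]) (use L C0 in auto)
  qed (use T t in auto)
  have X0: "X 0 = y"
  proof -
    have "(\<lambda>n. Xs n 0) \<longlonglongrightarrow> y" using sols by (simp add: is_sol_def)
    then show ?thesis using cX[of 0] T LIMSEQ_unique by auto
  qed
  have V0: "V 0 = v"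
  proof -
    have "(\<lambda>n. Vs n 0) \<longlonglongrightarrow> v" using sols lim by (simp add: is_sol_def)
    then show ?thesis using cV[of 0] T LIMSEQ_unique by auto
  qed
  have "is_sol g T y v X V" unfolding is_sol_def using X0 V0 dX dV by auto
  then show "v \<in> {v. \<exists>X V. is_sol g T y v X V}" by blast
qed

lemma ham_cont:
  fixes g :: "'a::euclidean_space \<Rightarrow> 'a"
  assumes lip: "\<And>u w. norm (g u - g w) \<le> L * norm (u - w)" and L: "0 \<le> L" and T: "0 \<le> T"
  shows "continuous_on {v. \<exists>X V. is_sol g T y v X V} (ham_pos g T y)"
proof (rule lipschitz_on_continuous_on[OF lipschitz_onI])
  fix v w assume v: "v \<in> {v. \<exists>X V. is_sol g T y v X V}" and w: "w \<in> {v. \<exists>X V. is_sol g T y v X V}"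
  then obtain X1 V1 X2 V2 where s1: "is_sol g T y v X1 V1" and s2: "is_sol g T y w X2 V2" by blast
  have "dist (ham_pos g T y v) (ham_pos g T y w) = norm (X1 T - X2 T)"
    using ham_pos_sol[OF lip L T s1] ham_pos_sol[OF lip L T s2] by (simp add: dist_norm)
  also have "\<dots> \<le> sqrt (exp ((1+L)*T)) * norm (v - w)" using T by (intro stab_norm(1)[OF lip L s1 s2]) auto
  finally show "dist (ham_pos g T y v) (ham_pos g T y w) \<le> sqrt (exp ((1+L)*T)) * dist v w"
    by (simp add: dist_norm)
qed simp

lemma ham_meas:
  fixes g :: "'a::euclidean_space \<Rightarrow> 'a"
  assumes lip: "\<And>u w. norm (g u - g w) \<le> L * norm (u - w)" and L: "0 \<le> L" and T: "0 \<le> T"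
  shows "ham_pos g T y \<in> borel_measurable borel"
proof -
  define E where "E = {v. \<exists>X V. is_sol g T y v X V}"
  have eq: "ham_pos g T y = (\<lambda>v. if v \<in> E then ham_pos g T y v else (THE p::'a. False))"
  proof
    fix v show "ham_pos g T y v = (if v \<in> E then ham_pos g T y v else (THE p::'a. False))"
    proof (cases "v \<in> E")
      case False
      then have eq0: "(\<lambda>p. \<exists>X V. is_sol g T y v X V \<and> p = X T) = (\<lambda>p. False)" by (auto simp: E_def)
      show ?thesis using False unfolding ham_pos_is_sol eq0 by simp
    qed simp
  qed
  have "(\<lambda>v. if v \<in> E then ham_pos g T y v else (THE p::'a. False)) \<in> borel_measurable borel"
    by (rule borel_measurable_continuous_on_if)
       (use E_closed[OF lip L T] ham_cont[OF lip L T] in \<open>auto simp: E_def intro: borel_closed\<close>)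
  then show ?thesis using eq by simp
qed



lemma g_lip:
  fixes g :: "'a::euclidean_space \<Rightarrow> 'a" and H :: "'a \<Rightarrow> 'a \<Rightarrow>\<^sub>L 'a"
  assumes hess: "\<And>z. (g has_derivative blinfun_apply (H z)) (at z)"
    and hess_bound: "\<And>z. norm (H z) \<le> L"
  shows "norm (g u - g w) \<le> L * norm (u - w)"
proof (rule differentiable_bound[OF convex_UNIV])
  show "(g has_derivative blinfun_apply (H z)) (at z within UNIV)" for z using hess by simp
  show "onorm (blinfun_apply (H z)) \<le> L" for z using hess_bound[of z] by (simp add: norm_blinfun.rep_eq)
qed auto

lemma lf_step_cont:
  assumes "continuous_on UNIV g"
  shows "continuous_on UNIV (lf_step g h)"
proof -
  have eq: "lf_step g h = (\<lambda>p. (fst p + h *\<^sub>R snd p - (h\<^sup>2 / 2) *\<^sub>R g (fst p),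
      snd p - (h / 2) *\<^sub>R (g (fst p) + g (fst p + h *\<^sub>R snd p - (h\<^sup>2 / 2) *\<^sub>R g (fst p)))))"
    by (auto simp: lf_step_def Let_def fun_eq_iff)
  show ?thesis unfolding eq
    using assms by (intro continuous_intros continuous_on_compose2[OF assms]) auto
qed

lemma funpow_cont:
  fixes f :: "'a::topological_space \<Rightarrow> 'a"
  assumes "continuous_on UNIV f"
  shows "continuous_on UNIV (f ^^ n)"
proof (induction n)
  case 0
  have "f ^^ 0 = (\<lambda>x. x)" by (simp add: fun_eq_iff)
  then show ?case by (simp add: continuous_on_id)
next
  case (Suc n)
  have "f ^^ Suc n = f \<circ> (f ^^ n)" by simp
  then show ?case
    using continuous_on_compose[OF Suc continuous_on_subset[OF assms]] by auto
qed

lemma qtilde_meas_pos: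
  assumes "continuous_on UNIV g" "h \<noteq> 0"
  shows "qtilde g T h y \<in> borel_measurable borel"
proof -
  have "qtilde g T h y = (\<lambda>v. fst ((lf_step g h ^^ nat \<lfloor>T / h\<rfloor>) (y, v)))"
    using assms(2) by (auto simp: qtilde_def fun_eq_iff)
  also have "\<dots> \<in> borel_measurable borel"
    by (intro borel_measurable_continuous_onI continuous_on_fst
        continuous_on_compose2[OF funpow_cont[OF lf_step_cont[OF assms(1)]]] continuous_intros) auto
  finally show ?thesis .
qed


theorem lemma2:
  fixes f :: "'a::euclidean_space \<Rightarrow> real"
    and g :: "'a \<Rightarrow> 'a"
    and H :: "'a \<Rightarrow> 'a \<Rightarrow>\<^sub>L 'a"
    and \<phi> :: "'a \<Rightarrow> 'a"
    and x y :: 'a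
    and L T h :: real
  assumes grad: "\<And>z. (f has_derivative (\<lambda>u. g z \<bullet> u)) (at z)"
    and hess: "\<And>z. (g has_derivative blinfun_apply (H z)) (at z)"
    and hess_cont: "continuous_on UNIV H"
    and hess_bound: "\<And>z. norm (H z) \<le> L"
    and T_pos: "T > 0"
    and T_bound: "L * T\<^sup>2 \<le> 2 / 5 * pi\<^sup>2"
    and h_nonneg: "h \<ge> 0"
    and h_grid: "h > 0 \<Longrightarrow> T / h \<in> \<nat>"
    and \<phi>_meas: "\<phi> \<in> borel_measurable borel"
    and \<phi>_couple: "\<And>v. qtilde g T h x v = qtilde g T h y (\<phi> v)"
  shows "KL_div (kernel_from g T h x) (kernel_from g T h y)
           \<le> KL_div (distr std_gauss borel \<phi>) std_gauss
       \<and> (\<forall>q. 1 < q \<longrightarrow> Renyi_div q (kernel_from g T h x) (kernel_from g T h y)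
                         \<le> Renyi_div q (distr std_gauss borel \<phi>) std_gauss)"
proof -
  have L0: "0 \<le> L" using hess_bound[of 0] norm_ge_zero[of "H 0"] by linarith
  have lip: "\<And>u w. norm (g u - g w) \<le> L * norm (u - w)" by (rule g_lip[OF hess hess_bound])
  have gcont: "continuous_on UNIV g"
    using hess by (intro continuous_at_imp_continuous_on ballI has_derivative_continuous) auto
  define F where "F = qtilde g T h y"
  have Fm: "F \<in> borel_measurable borel"
  proof (cases "h = 0")
    case True
    have "F = ham_pos g T y" unfolding F_def True by (simp add: qtilde_def fun_eq_iff)
    then show ?thesis using ham_meas[OF lip L0] T_pos by simp
  next
    case False
    then show ?thesis unfolding F_def by (rule qtilde_meas_pos[OF gcont])
  qed
  have sg: "sets (std_gauss :: 'a measure) = sets borel" by (simp add: std_gauss_def)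
  have Fm': "F \<in> measurable std_gauss borel" unfolding measurable_cong_sets[OF sg refl[of "sets borel"]] by (rule Fm)
  have \<phi>m: "\<phi> \<in> measurable std_gauss borel" unfolding measurable_cong_sets[OF sg refl[of "sets borel"]] by (rule \<phi>_meas)
  have ps: "prob_space (std_gauss :: 'a measure)" by (rule prob_space_std_gauss)
  interpret ps: prob_space "std_gauss :: 'a measure" by (rule ps)
  define P where "P = distr std_gauss borel \<phi>"
  have Pp: "prob_space P" unfolding P_def by (rule ps.prob_space_distr[OF \<phi>m])
  have Pf: "finite_measure P" using Pp by (simp add: prob_space_def)
  have Qf: "finite_measure (std_gauss :: 'a measure)" using ps by (simp add: prob_space_def)
  have se: "sets P = sets std_gauss" by (simp add: P_def sg)
  have Fm'': "F \<in> measurable std_gauss borel" by (rule Fm')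
  have kx: "kernel_from g T h x = distr P borel F"
  proof -
    have "qtilde g T h x = F \<circ> \<phi>" by (simp add: F_def fun_eq_iff \<phi>_couple)
    then show ?thesis unfolding kernel_from_def P_def
      using distr_distr[OF Fm \<phi>m] by simp
  qed
  have ky: "kernel_from g T h y = distr std_gauss borel F" by (simp add: kernel_from_def F_def)
  have Pnz: "emeasure P (space P) \<noteq> 0" using prob_space.emeasure_space_1[OF Pp] by simp
  show ?thesis
    unfolding kx ky P_def[symmetric]
    using KL_dpi[OF Qf Pf se Fm''] Renyi_dpi[OF Qf Pf se Fm'' Pnz] by blast
qed

end
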